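(* Suppose that bounded operators $B(x):\mathbb C^2\to\mathcal K$, $C(x):\mathcal K\to\mathbb C^2$, $\mathbb X(x):\mathcal K\to\mathcal K$, differentiable in $x\in\mathbb R$, satisfy $\frac{\partial}{\partial x}B(x)=-(AB\sigma_2+B\gamma)\sigma_1^{-1}$, $\frac{\partial}{\partial x}C(x)u=\sigma_1^{-1}(-\sigma_2 C A_\zeta u+\gamma C u)$ for all $u\in D(A_\zeta)$, and $\frac{\partial}{\partial x}\mathbb X=B\sigma_2C$, and that $\mathbb X(x)(D(A_\zeta))\subseteq D(A)$ for all $x\in\mathbb R$. If the Lyapunov equation $A\mathbb X(x)u+\mathbb X(x)A_\zeta u+B(x)\sigma_1C(x)u=0$ (for all $u\in D(A)$) holds for a fixed $x_0$, then it holds for all $x$. In the case the operator $\mathbb X(x)$ is invertible and $B(x),C(x),\mathbb X(x)$ are part of an invertible node, if the equation $A_\zeta\mathbb X^{-1}(x)u'+\mathbb X^{-1}(x)Au'+\mathbb X^{-1}(x)B(x)\sigma_1C(x)\mathbb X^{-1}(x)u'=0$ (for all $u'\in D(A)$) holds for a fixed $x_0$, then it holds for all $x$.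
   Context: $\mathcal K$ is a Krein space; $A,A_\zeta$ are generators of $C_0$ groups on $\mathcal K$ with identical dense domain $D(A)=D(A_\zeta)$; $\sigma_1=\sigma_1^*$ is an invertible $2\times2$ matrix, $\sigma_2=\sigma_2^*$ and $\gamma=-\gamma^*$ are fixed $2\times2$ matrices; $B(x)\sigma_2$ is $A$-regular, i.e. $B(x)\sigma_2 e\in D(A)$ for all $e\in\mathbb C^2$. An invertible node means: $\mathbb X$ is invertible with $\mathbb X(D(A))\subseteq D(A)$ and $\mathbb X^{-1}(D(A))\subseteq D(A)$, and the Lyapunov equation $A\mathbb Xu+\mathbb XA_\zeta u+B\sigma_1Cu=0$ holds for $u\in D(A)$. *)

theory Defs
  imports "HOL-Analysis.Analysis"
begin

text \<open>HOL-Analysis has no complex normed vector spaces, so the complex Banach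
space underlying the Krein space is modelled as a real Banach space together
with a complex structure I (multiplication by the imaginary unit).\<close>

definition complex_structure :: "('k::real_normed_vector \<Rightarrow> 'k) \<Rightarrow> bool" where
  "complex_structure I \<longleftrightarrow> bounded_linear I \<and> (\<forall>u. I (I u) = - u)"

definition cscale :: "('k::real_vector \<Rightarrow> 'k) \<Rightarrow> complex \<Rightarrow> 'k \<Rightarrow> 'k" where
  "cscale I c u = Re c *\<^sub>R u + Im c *\<^sub>R I u"

definition commutes_I :: "('a \<Rightarrow> 'a) \<Rightarrow> ('b \<Rightarrow> 'b) \<Rightarrow> ('a \<Rightarrow> 'b) \<Rightarrow> bool" where
  "commutes_I I1 I2 f \<longleftrightarrow> (\<forall>u. f (I1 u) = I2 (f u))"

definition iC2 :: "complex^2 \<Rightarrow> complex^2" where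
  "iC2 v = \<i> *s v"

definition krein_space ::
  "('k::{real_normed_vector,banach} \<Rightarrow> 'k) \<Rightarrow> ('k \<Rightarrow> 'k \<Rightarrow> complex) \<Rightarrow> ('k \<Rightarrow> 'k) \<Rightarrow> bool" where
  "krein_space I form J \<longleftrightarrow>
     complex_structure I \<and>
     (\<forall>u v w. form (u + v) w = form u w + form v w) \<and>
     (\<forall>c u w. form (cscale I c u) w = c * form u w) \<and>
     (\<forall>u v. form u v = cnj (form v u)) \<and>
     bounded_linear J \<and> commutes_I I I J \<and> (\<forall>u. J (J u) = u) \<and>
     (\<forall>u v. form (J u) v = form u (J v)) \<and>
     (\<forall>u. form (J u) u = complex_of_real ((norm u)\<^sup>2))"

definition C0_group :: "('k::{real_normed_vector,banach} \<Rightarrow> 'k) \<Rightarrow> (real \<Rightarrow> ('k \<Rightarrow>\<^sub>L 'k)) \<Rightarrow> bool" where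
  "C0_group I T \<longleftrightarrow>
     T 0 = id_blinfun \<and>
     (\<forall>s t. T (s + t) = T s o\<^sub>L T t) \<and>
     (\<forall>u. continuous_on UNIV (\<lambda>t. T t u)) \<and>
     (\<forall>t. commutes_I I I (blinfun_apply (T t)))"

definition generator :: "(real \<Rightarrow> ('k::{real_normed_vector,banach} \<Rightarrow>\<^sub>L 'k)) \<Rightarrow> 'k set \<Rightarrow> ('k \<Rightarrow> 'k) \<Rightarrow> bool" where
  "generator T D A \<longleftrightarrow>
     D = {u. \<exists>v. ((\<lambda>t. T t u) has_vector_derivative v) (at 0)} \<and>
     (\<forall>u\<in>D. ((\<lambda>t. T t u) has_vector_derivative A u) (at 0))"

definition generates_C0_group :: "('k::{real_normed_vector,banach} \<Rightarrow> 'k) \<Rightarrow> 'k set \<Rightarrow> ('k \<Rightarrow> 'k) \<Rightarrow> bool" where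
  "generates_C0_group I D A \<longleftrightarrow> (\<exists>T. C0_group I T \<and> generator T D A)"

definition mat_adj :: "complex^2^2 \<Rightarrow> complex^2^2" where
  "mat_adj M = (\<chi> i j. cnj (M $ j $ i))"

definition lyapunov_eq ::
  "('k \<Rightarrow> 'k) \<Rightarrow> ('k \<Rightarrow> 'k) \<Rightarrow> 'k set \<Rightarrow> complex^2^2 \<Rightarrow>
   ((complex^2) \<Rightarrow>\<^sub>L 'k::real_normed_vector) \<Rightarrow> ('k \<Rightarrow>\<^sub>L (complex^2)) \<Rightarrow> ('k \<Rightarrow>\<^sub>L 'k) \<Rightarrow> bool" where
  "lyapunov_eq A A\<^sub>\<zeta> D \<sigma>\<^sub>1 B C X \<longleftrightarrow>
     (\<forall>u\<in>D. A (X u) + X (A\<^sub>\<zeta> u) + B (\<sigma>\<^sub>1 *v C u) = 0)"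

definition inv_lyapunov_eq ::
  "('k \<Rightarrow> 'k) \<Rightarrow> ('k \<Rightarrow> 'k) \<Rightarrow> 'k set \<Rightarrow> complex^2^2 \<Rightarrow>
   ((complex^2) \<Rightarrow>\<^sub>L 'k::real_normed_vector) \<Rightarrow> ('k \<Rightarrow>\<^sub>L (complex^2)) \<Rightarrow> ('k \<Rightarrow>\<^sub>L 'k) \<Rightarrow> bool" where
  "inv_lyapunov_eq A A\<^sub>\<zeta> D \<sigma>\<^sub>1 B C X \<longleftrightarrow>
     (let Xi = inv (blinfun_apply X) in
      \<forall>u'\<in>D. A\<^sub>\<zeta> (Xi u') + Xi (A u') + Xi (B (\<sigma>\<^sub>1 *v C (Xi u'))) = 0)"

definition invertible_node ::
  "('k \<Rightarrow> 'k) \<Rightarrow> ('k \<Rightarrow> 'k) \<Rightarrow> 'k set \<Rightarrow> complex^2^2 \<Rightarrow>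
   ((complex^2) \<Rightarrow>\<^sub>L 'k::real_normed_vector) \<Rightarrow> ('k \<Rightarrow>\<^sub>L (complex^2)) \<Rightarrow> ('k \<Rightarrow>\<^sub>L 'k) \<Rightarrow> bool" where
  "invertible_node A A\<^sub>\<zeta> D \<sigma>\<^sub>1 B C X \<longleftrightarrow>
     bij (blinfun_apply X) \<and> X ` D \<subseteq> D \<and> inv (blinfun_apply X) ` D \<subseteq> D \<and>
     lyapunov_eq A A\<^sub>\<zeta> D \<sigma>\<^sub>1 B C X"

end

theory Submission
  imports Defs
begin

lemma group_deriv:
  fixes T :: "real \<Rightarrow> ('k::banach \<Rightarrow>\<^sub>L 'k)"
  assumes G: "C0_group I T" and gen: "generator T D A" and y: "y \<in> D"
  shows "((\<lambda>r. T r y) has_vector_derivative T r (A y)) (at r)"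
proof -
  have d0: "((\<lambda>h. T h y) has_vector_derivative A y) (at 0)"
    using gen y unfolding generator_def by blast
  have "((\<lambda>h. T r (T h y)) has_vector_derivative T r (A y)) (at 0)"
    by (rule bounded_linear.has_vector_derivative[OF blinfun.bounded_linear_right d0])
  moreover have "T r (T h y) = T (r + h) y" for h
    using G unfolding C0_group_def by simp
  ultimately have d1: "((\<lambda>h. T (r + h) y) has_vector_derivative T r (A y)) (at 0)" by simp
  have d2: "((\<lambda>s. s - r) has_vector_derivative 1) (at r)"
    by (auto intro!: derivative_eq_intros)
  have "(((\<lambda>h. T (r + h) y) \<circ> (\<lambda>s. s - r)) has_vector_derivative (1 *\<^sub>R T r (A y))) (at r)"
    by (rule vector_diff_chain_at[OF d2]) (use d1 in simp)
  thus ?thesis by (simp add: o_def)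
qed

lemma group_integral:
  fixes T :: "real \<Rightarrow> ('k::banach \<Rightarrow>\<^sub>L 'k)"
  assumes G: "C0_group I T" and gen: "generator T D A" and y: "y \<in> D" and t: "0 \<le> t"
  shows "integral {0..t} (\<lambda>r. T r (A y)) = T t y - y"
proof -
  have "((\<lambda>r. T r (A y)) has_integral (T t y - T 0 y)) {0..t}"
    by (rule fundamental_theorem_of_calculus[OF t])
       (rule has_vector_derivative_at_within[OF group_deriv[OF G gen y]])
  moreover have "T 0 y = y" using G by (simp add: C0_group_def)
  ultimately show ?thesis by (simp add: integral_unique)
qed

lemma uniform_bound:
  fixes S :: "('a::banach \<Rightarrow>\<^sub>L 'b::real_normed_vector) set"
  assumes bd: "\<And>v. bounded ((\<lambda>T. blinfun_apply T v) ` S)"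
  shows "\<exists>M. \<forall>T\<in>S. norm T \<le> M"
proof -
  define F where "F n = {v. \<forall>T\<in>S. norm (T v) \<le> real n}" for n::nat
  have F_eq: "F n = (\<Inter>T\<in>S. {v. norm (blinfun_apply T v) \<le> real n})" for n
    by (auto simp: F_def)
  have cl: "closed (F n)" for n
    unfolding F_eq
    by (intro closed_INT ballI closed_Collect_le continuous_intros) 
  have un: "\<Union>(range F) = UNIV"
  proof -
    { fix v
      obtain B where B: "\<And>y. y \<in> (\<lambda>T. blinfun_apply T v) ` S \<Longrightarrow> norm y \<le> B"
        using bd[of v] unfolding bounded_iff by blast
      have "v \<in> F (nat \<lceil>B\<rceil>)"
        unfolding F_def
      proof (intro CollectI ballI)
        fix T assume "T \<in> S"
        hence "norm (T v) \<le> B" using B by blast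
        thus "norm (T v) \<le> real (nat \<lceil>B\<rceil>)"
          using real_nat_ceiling_ge[of B] by linarith
      qed
      hence "v \<in> \<Union>(range F)" by blast }
    thus ?thesis by blast
  qed
  have "\<exists>n. interior (F n) \<noteq> {}"
  proof (rule ccontr)
    assume H: "\<not> (\<exists>n. interior (F n) \<noteq> {})"
    have cF: "closedin Met_TC.mtopology T \<and> Met_TC.mtopology interior_of T = {}" if "T \<in> range F" for T
    proof -
      from that obtain n where Tn: "T = F n" by (rule rangeE)
      have "closedin euclidean T" using cl[of n] Tn closed_closedin by blast
      moreover have "interior T = {}" using H Tn by blast
      ultimately show ?thesis by simp
    qed
    have mc: "Met_TC.mcomplete TYPE('a)"
      using mcomplete_iff_complete complete_UNIV by blast
    have "Met_TC.mtopology interior_of \<Union>(range F) = {}"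
      by (rule Met_TC.metric_Baire_category_alt[OF mc _ cF]) simp
    thus False using un by simp
  qed
  then obtain n v0 where "v0 \<in> interior (F n)" by blast
  then obtain e where e: "e > 0" "ball v0 e \<subseteq> F n"
    using mem_interior by blast
  have "norm T \<le> 4 * real n / e" if T: "T \<in> S" for T
  proof (rule norm_blinfun_bound)
    show "0 \<le> 4 * real n / e" using e by simp
    fix y :: 'a
    show "norm (T y) \<le> 4 * real n / e * norm y"
    proof (cases "y = 0")
      case True thus ?thesis by simp
    next
      case False
      define y' where "y' = (e / 2 / norm y) *\<^sub>R y"
      have ny': "norm y' = e/2" using False e by (simp add: y'_def)
      have "v0 + y' \<in> F n" "v0 \<in> F n"
        using e ny' by (auto intro!: subsetD[OF e(2)] simp: dist_norm)
      hence "norm (T (v0 + y')) \<le> n" "norm (T v0) \<le> n" using T by (auto simp: F_def)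
      moreover have "T y' = T (v0 + y') - T v0" by (simp add: blinfun.add_right)
      ultimately have "norm (T y') \<le> 2 * n"
        using norm_triangle_ineq4[of "T (v0 + y')" "T v0"] by simp
      moreover have "T y' = (e / 2 / norm y) *\<^sub>R T y"
        by (simp add: y'_def blinfun.scaleR_right)
      ultimately have "(e / 2 / norm y) * norm (T y) \<le> 2 * n"
        using e by simp
      thus ?thesis using e False
        by (simp add: field_simps)
    qed
  qed
  thus ?thesis by blast
qed


lemma key_constant:
  fixes T :: "real \<Rightarrow> ('k::banach \<Rightarrow>\<^sub>L 'k)" and Y z g :: "real \<Rightarrow> 'k"
  assumes G: "C0_group I T" and gen: "generator T D A"
    and Yd: "\<And>s. (Y has_vector_derivative z s) (at s)"
    and zD: "\<And>s. z s \<in> D" and YD: "\<And>s. Y s \<in> D"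
    and gd: "\<And>s. (g has_vector_derivative - A (z s)) (at s)"
  shows "A (Y x) + g x = A (Y x0) + g x0"
proof -
  have cont: "continuous_on S (\<lambda>r. T r v)" for v S
    using G unfolding C0_group_def by (meson continuous_on_subset top_greatest)
  have "\<exists>M. \<forall>S\<in>T ` {0..1}. norm S \<le> M"
  proof (rule uniform_bound)
    fix v
    have "compact ((\<lambda>r. T r v) ` {0..1})"
      by (rule compact_continuous_image[OF cont]) simp
    hence "bounded ((\<lambda>r. T r v) ` {0..1})" by (rule compact_imp_bounded)
    thus "bounded ((\<lambda>S. blinfun_apply S v) ` T ` {0..1})" by (simp add: image_image)
  qed
  then obtain M where M: "\<And>r. r \<in> {0..1} \<Longrightarrow> norm (T r) \<le> M" by blast
  define L where "L t v = integral {0..t} (\<lambda>r. T r v)" for t v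
  define q where "q = A (Y x) + g x - (A (Y x0) + g x0)"
  have intg: "(\<lambda>r. T r v) integrable_on {0..t}" for t v
    by (rule integrable_continuous_real[OF cont])
  have Lq: "L t q = 0" if t: "t \<in> {0..1}" for t
  proof -
    have bl: "bounded_linear (L t)"
    proof (rule bounded_linear_intro)
      show "L t (v + w) = L t v + L t w" for v w
        unfolding L_def by (simp add: blinfun.add_right integral_add intg)
      show "L t (c *\<^sub>R v) = c *\<^sub>R L t v" for c v
        unfolding L_def by (simp add: blinfun.scaleR_right)
      show "norm (L t v) \<le> norm v * (M * t)" for v
      proof -
        have "norm (L t v) \<le> (M * norm v) * (t - 0)"
          unfolding L_def
        proof (rule integral_bound)
          show "0 \<le> t" using t by simp
          show "continuous_on {0..t} (\<lambda>r. T r v)" by (rule cont)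
          fix r assume "r \<in> {0..t}"
          hence "norm (T r) \<le> M" using M t by auto
          thus "norm (T r v) \<le> M * norm v"
            by (meson norm_blinfun mult_right_mono norm_ge_zero order_trans)
        qed
        thus ?thesis by (simp add: algebra_simps)
      qed
    qed
    interpret Lb: bounded_linear "L t" by (rule bl)
    have LA: "L t (A y) = T t y - y" if "y \<in> D" for y
      unfolding L_def by (rule group_integral[OF G gen that]) (use t in simp)
    define P where "P s = T t (Y s) + L t (g s) - Y s" for s
    have "(P has_vector_derivative (T t (z s) + L t (- A (z s)) - z s)) (at s)" for s
      unfolding P_def
      by (intro derivative_intros bounded_linear.has_vector_derivative[OF blinfun.bounded_linear_right]
                Lb.has_vector_derivative Yd gd)
    moreover have "T t (z s) + L t (- A (z s)) - z s = 0" for s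
      using LA[OF zD[of s]] by (simp add: Lb.neg)
    ultimately have "(P has_derivative (\<lambda>h. 0)) (at s within UNIV)" for s
      unfolding has_vector_derivative_def by simp
    then obtain c where "\<forall>s\<in>UNIV. P s = c"
      using has_derivative_zero_constant[of UNIV P] by auto
    hence "P x = P x0" by simp
    hence "L t (A (Y x)) + L t (g x) = L t (A (Y x0)) + L t (g x0)"
      unfolding P_def LA[OF YD] by (simp add: algebra_simps)
    thus ?thesis unfolding q_def by (simp add: Lb.add Lb.diff)
  qed
  have d1: "((\<lambda>t. L t q) has_vector_derivative T 0 q) (at 0 within {0..1})"
    unfolding L_def by (rule integral_has_vector_derivative[OF cont]) simp
  have d2: "((\<lambda>t. L t q) has_vector_derivative 0) (at 0 within {0..1})"
    by (rule has_vector_derivative_transform[of 0 _ _ "\<lambda>_. 0"]) (auto simp: Lq)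
  have "T 0 q = 0"
    by (rule vector_derivative_unique_within[OF _ d1 d2]) (simp add: at_within_Icc_at_right)
  hence "q = 0" using G by (simp add: C0_group_def)
  thus ?thesis unfolding q_def by simp
qed


lemma mv_bl: "bounded_linear (\<lambda>v::complex^2. (M::complex^2^2) *v v)"
  apply (rule linear_conv_bounded_linear[THEN iffD1])
  apply (rule linearI)
  apply (simp add: matrix_vector_right_distrib)
  apply (simp add: matrix_vector_mult_def vec_eq_iff scaleR_sum_right)
  done

theorem mainTheorem4:
  fixes I :: "'k::{real_normed_vector,banach} \<Rightarrow> 'k"
    and form :: "'k \<Rightarrow> 'k \<Rightarrow> complex" and J :: "'k \<Rightarrow> 'k"
    and A A\<^sub>\<zeta> :: "'k \<Rightarrow> 'k" and D :: "'k set"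
    and \<sigma>\<^sub>1 \<sigma>\<^sub>2 \<gamma> :: "complex^2^2"
    and B B' :: "real \<Rightarrow> ((complex^2) \<Rightarrow>\<^sub>L 'k)"
    and C C' :: "real \<Rightarrow> ('k \<Rightarrow>\<^sub>L (complex^2))"
    and X X' :: "real \<Rightarrow> ('k \<Rightarrow>\<^sub>L 'k)"
    and x\<^sub>0 :: real
  assumes krein: "krein_space I form J"
    and genA: "generates_C0_group I D A"
    and genA\<^sub>\<zeta>: "generates_C0_group I D A\<^sub>\<zeta>"
    and dense: "closure D = UNIV"
    and \<sigma>\<^sub>1_sa: "mat_adj \<sigma>\<^sub>1 = \<sigma>\<^sub>1" and \<sigma>\<^sub>1_inv: "invertible \<sigma>\<^sub>1"
    and \<sigma>\<^sub>2_sa: "mat_adj \<sigma>\<^sub>2 = \<sigma>\<^sub>2"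
    and \<gamma>_skew: "mat_adj \<gamma> = - \<gamma>"
    and B_clin: "\<And>x. commutes_I iC2 I (blinfun_apply (B x))"
    and C_clin: "\<And>x. commutes_I I iC2 (blinfun_apply (C x))"
    and X_clin: "\<And>x. commutes_I I I (blinfun_apply (X x))"
    and A_regular: "\<And>x e. B x (\<sigma>\<^sub>2 *v e) \<in> D"
    and B_deriv: "\<And>x. (B has_vector_derivative B' x) (at x)"
    and C_deriv: "\<And>x. (C has_vector_derivative C' x) (at x)"
    and X_deriv: "\<And>x. (X has_vector_derivative X' x) (at x)"
    and B'_eq: "\<And>x e. B' x e =
          - (A (B x (\<sigma>\<^sub>2 *v (matrix_inv \<sigma>\<^sub>1 *v e))) + B x (\<gamma> *v (matrix_inv \<sigma>\<^sub>1 *v e)))"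
    and C'_eq: "\<And>x u. u \<in> D \<Longrightarrow> C' x u =
          matrix_inv \<sigma>\<^sub>1 *v (- (\<sigma>\<^sub>2 *v C x (A\<^sub>\<zeta> u)) + \<gamma> *v C x u)"
    and X'_eq: "\<And>x u. X' x u = B x (\<sigma>\<^sub>2 *v C x u)"
    and X_dom: "\<And>x. X x ` D \<subseteq> D"
  shows "(lyapunov_eq A A\<^sub>\<zeta> D \<sigma>\<^sub>1 (B x\<^sub>0) (C x\<^sub>0) (X x\<^sub>0) \<longrightarrow>
            (\<forall>x. lyapunov_eq A A\<^sub>\<zeta> D \<sigma>\<^sub>1 (B x) (C x) (X x)))
       \<and> ((\<forall>x. invertible_node A A\<^sub>\<zeta> D \<sigma>\<^sub>1 (B x) (C x) (X x))
            \<and> inv_lyapunov_eq A A\<^sub>\<zeta> D \<sigma>\<^sub>1 (B x\<^sub>0) (C x\<^sub>0) (X x\<^sub>0) \<longrightarrow>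
            (\<forall>x. inv_lyapunov_eq A A\<^sub>\<zeta> D \<sigma>\<^sub>1 (B x) (C x) (X x)))"
  proof (intro conjI impI allI)
  obtain Mi where Mi: "\<sigma>\<^sub>1 ** Mi = mat 1" "Mi ** \<sigma>\<^sub>1 = mat 1" "Mi = matrix_inv \<sigma>\<^sub>1"
    using \<sigma>\<^sub>1_inv unfolding invertible_def matrix_inv_def by (metis (mono_tags, lifting) someI_ex)
  have mi1: "\<sigma>\<^sub>1 *v (matrix_inv \<sigma>\<^sub>1 *v w) = w" for w
    using Mi by (simp add: matrix_vector_mul_assoc)
  have mi2: "matrix_inv \<sigma>\<^sub>1 *v (\<sigma>\<^sub>1 *v w) = w" for w
    using Mi by (simp add: matrix_vector_mul_assoc)
  {
    fix x
    assume L0: "lyapunov_eq A A\<^sub>\<zeta> D \<sigma>\<^sub>1 (B x\<^sub>0) (C x\<^sub>0) (X x\<^sub>0)"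
    show "lyapunov_eq A A\<^sub>\<zeta> D \<sigma>\<^sub>1 (B x) (C x) (X x)"
      unfolding lyapunov_eq_def
    proof
      fix u assume u: "u \<in> D"
      obtain T where G: "C0_group I T" and gen: "generator T D A"
        using genA unfolding generates_C0_group_def by blast
      define g where "g s = X s (A\<^sub>\<zeta> u) + B s (\<sigma>\<^sub>1 *v C s u)" for s
      have Yd: "((\<lambda>s. X s u) has_vector_derivative X' s u) (at s)" for s
        by (rule bounded_linear.has_vector_derivative[OF blinfun.bounded_linear_left X_deriv])
      have zD: "X' s u \<in> D" for s unfolding X'_eq by (rule A_regular)
      have YD: "X s u \<in> D" for s using X_dom u by blast
      have gd: "(g has_vector_derivative - A (X' s u)) (at s)" for s
      proof -
        have d1: "((\<lambda>s. X s (A\<^sub>\<zeta> u)) has_vector_derivative X' s (A\<^sub>\<zeta> u)) (at s)"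
          by (rule bounded_linear.has_vector_derivative[OF blinfun.bounded_linear_left X_deriv])
        have dC: "((\<lambda>s. C s u) has_vector_derivative C' s u) (at s)"
          by (rule bounded_linear.has_vector_derivative[OF blinfun.bounded_linear_left C_deriv])
        have dC2: "((\<lambda>s. \<sigma>\<^sub>1 *v C s u) has_vector_derivative \<sigma>\<^sub>1 *v C' s u) (at s)"
          by (rule bounded_linear.has_vector_derivative[OF mv_bl dC])
        have d2: "((\<lambda>s. B s (\<sigma>\<^sub>1 *v C s u)) has_vector_derivative
                   (B s (\<sigma>\<^sub>1 *v C' s u) + B' s (\<sigma>\<^sub>1 *v C s u))) (at s)"
          by (rule blinfun.has_vector_derivative[OF B_deriv dC2])
        have "(g has_vector_derivative
               (X' s (A\<^sub>\<zeta> u) + (B s (\<sigma>\<^sub>1 *v C' s u) + B' s (\<sigma>\<^sub>1 *v C s u)))) (at s)"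
          unfolding g_def by (rule derivative_intros d1 d2)+
        moreover have "X' s (A\<^sub>\<zeta> u) + (B s (\<sigma>\<^sub>1 *v C' s u) + B' s (\<sigma>\<^sub>1 *v C s u))
                       = - A (X' s u)"
          by (simp add: X'_eq B'_eq C'_eq[OF u] mi1 mi2 blinfun.add_right blinfun.minus_right blinfun.diff_right)
        ultimately show ?thesis by simp
      qed
      have "A (X x u) + g x = A (X x\<^sub>0 u) + g x\<^sub>0"
        by (rule key_constant[OF G gen Yd zD YD gd])
      also have "\<dots> = 0" using L0 u unfolding lyapunov_eq_def g_def by (simp add: add.assoc)
      finally show "A (X x u) + X x (A\<^sub>\<zeta> u) + B x (\<sigma>\<^sub>1 *v C x u) = 0"
        unfolding g_def by (simp add: add.assoc)
    qed
  }
  {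
    fix x
    assume H: "(\<forall>x. invertible_node A A\<^sub>\<zeta> D \<sigma>\<^sub>1 (B x) (C x) (X x))
            \<and> inv_lyapunov_eq A A\<^sub>\<zeta> D \<sigma>\<^sub>1 (B x\<^sub>0) (C x\<^sub>0) (X x\<^sub>0)"
    hence N: "invertible_node A A\<^sub>\<zeta> D \<sigma>\<^sub>1 (B x) (C x) (X x)" by blast
    define Xi where "Xi = inv (blinfun_apply (X x))"
    have bij: "bij (blinfun_apply (X x))" and XiD: "Xi ` D \<subseteq> D"
      and Ly: "lyapunov_eq A A\<^sub>\<zeta> D \<sigma>\<^sub>1 (B x) (C x) (X x)"
      using N unfolding invertible_node_def Xi_def by auto
    have XXi: "X x (Xi v) = v" for v
      using bij unfolding Xi_def by (simp add: bij_is_surj surj_f_inv_f)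
    have XiX: "Xi (X x v) = v" for v
      using bij unfolding Xi_def by (simp add: bij_is_inj inv_f_f)
    have Xi_add: "Xi (a + b) = Xi a + Xi b" for a b
      by (metis XiX XXi blinfun.add_right)
    have Xi0: "Xi 0 = 0" by (metis XiX blinfun.zero_right)
    show "inv_lyapunov_eq A A\<^sub>\<zeta> D \<sigma>\<^sub>1 (B x) (C x) (X x)"
      unfolding inv_lyapunov_eq_def Let_def Xi_def[symmetric]
    proof
      fix u' assume u': "u' \<in> D"
      hence uD: "Xi u' \<in> D" using XiD by blast
      have "A (X x (Xi u')) + X x (A\<^sub>\<zeta> (Xi u')) + B x (\<sigma>\<^sub>1 *v C x (Xi u')) = 0"
        using Ly uD unfolding lyapunov_eq_def by blast
      hence "Xi (A u' + X x (A\<^sub>\<zeta> (Xi u')) + B x (\<sigma>\<^sub>1 *v C x (Xi u'))) = 0"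
        by (simp add: XXi Xi0)
      hence "Xi (A u') + A\<^sub>\<zeta> (Xi u') + Xi (B x (\<sigma>\<^sub>1 *v C x (Xi u'))) = 0"
        by (simp add: Xi_add XiX)
      thus "A\<^sub>\<zeta> (Xi u') + Xi (A u') + Xi (B x (\<sigma>\<^sub>1 *v C x (Xi u'))) = 0"
        by (simp add: algebra_simps)
    qed
  }
qed

end
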